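(* Let $R$ be a tolerance relation on $\{1,\ldots,n\}$ and $T(b)=\sum_{(i,j)\in R}E_{ii}bE_{jj}$ for $b\in M_n(\mathbb{C})$. If $\rho\in M_n(\mathbb{C})$ is a density matrix, $v\in\mathbb{C}^n$ is an $R$-tolerant unit vector, and $T(\rho)=T(P_v)$, then $\rho=P_v$.
   Context: A tolerance relation is a reflexive and symmetric relation; its graph has an edge between $i\neq j$ whenever $(i,j)\in R$. $E_{ij}$ are the matrix units, so $T$ sets to zero all entries in positions $(i,j)\notin R$. A density matrix is a positive semidefinite matrix with trace $1$. For a unit vector $v$, $P_v=(v_i\overline{v_j})_{i,j}$. For non-zero $v$, $R_v:=\{(i,j)\in R:v_iv_j\ne0\}$, a tolerance relation on $\{i:v_i\ne0\}$; $v$ is $R$-tolerant if the graph of $R_v$ is connected. *)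

theory Defs
  imports "HOL-Analysis.Analysis"
begin

text \<open>Complex n x n matrices are modelled as complex^'n^'n, with 'n a finite index type
  standing for {1,...,n}; vectors in C^n as complex^'n.\<close>

definition tolerance_rel :: "('n \<times> 'n) set \<Rightarrow> bool" where
  "tolerance_rel R \<longleftrightarrow> (\<forall>i. (i, i) \<in> R) \<and> sym R"

definition mat_unit :: "'n::finite \<Rightarrow> 'n \<Rightarrow> complex^'n^'n" ("E") where
  "mat_unit i j = (\<chi> k l. if k = i \<and> l = j then 1 else 0)"

definition Tmap :: "('n::finite \<times> 'n) set \<Rightarrow> complex^'n^'n \<Rightarrow> complex^'n^'n" where
  "Tmap R b = (\<Sum>(i, j)\<in>R. E i i ** b ** E j j)"

definition mtrace :: "complex^'n^'n \<Rightarrow> complex" where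
  "mtrace A = (\<Sum>i\<in>UNIV. A $ i $ i)"

definition psd :: "complex^'n^'n \<Rightarrow> bool" where
  "psd A \<longleftrightarrow> (\<forall>x::complex^'n.
     let q = (\<Sum>i\<in>UNIV. \<Sum>j\<in>UNIV. cnj (x $ i) * A $ i $ j * x $ j) in Im q = 0 \<and> Re q \<ge> 0)"

definition density_matrix :: "complex^'n^'n \<Rightarrow> bool" where
  "density_matrix A \<longleftrightarrow> psd A \<and> mtrace A = 1"

definition proj_vec :: "complex^'n \<Rightarrow> complex^'n^'n" ("P") where
  "proj_vec v = (\<chi> i j. v $ i * cnj (v $ j))"

definition Rv :: "('n \<times> 'n) set \<Rightarrow> complex^'n \<Rightarrow> ('n \<times> 'n) set" where
  "Rv R v = {(i, j) \<in> R. v $ i \<noteq> 0 \<and> v $ j \<noteq> 0}"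

definition R_tolerant :: "('n \<times> 'n) set \<Rightarrow> complex^'n \<Rightarrow> bool" where
  "R_tolerant R v \<longleftrightarrow> v \<noteq> 0 \<and>
     (\<forall>i j. v $ i \<noteq> 0 \<longrightarrow> v $ j \<noteq> 0 \<longrightarrow> (i, j) \<in> (Rv R v)\<^sup>*)"

end

theory Submission
  imports Defs
begin

definition Bf :: "complex^'n^'n \<Rightarrow> complex^'n \<Rightarrow> complex^'n \<Rightarrow> complex" where
  "Bf A x y = (\<Sum>i\<in>UNIV. \<Sum>j\<in>UNIV. cnj (x $ i) * A $ i $ j * y $ j)"

lemma Tmap_entry:
  fixes R :: "('n::finite \<times> 'n) set"
  shows "Tmap R b $ k $ l = (if (k, l) \<in> R then b $ k $ l else 0)"
proof -
  have e: "(E i i ** b ** E j j) $ k $ l = (if (k, l) = (i, j) then b $ k $ l else 0)" for i j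
    by (auto simp: matrix_matrix_mult_def mat_unit_def sum.delta if_distrib[where f="\<lambda>x. x * c" for c] if_distrib[where f="\<lambda>x. c * x" for c] cong: if_cong)
  have "Tmap R b $ k $ l = (\<Sum>p\<in>R. (E (fst p) (fst p) ** b ** E (snd p) (snd p)) $ k $ l)"
    unfolding Tmap_def by (simp add: case_prod_beta)
  also have "\<dots> = (\<Sum>p\<in>R. if (k, l) = p then b $ k $ l else 0)"
    by (rule sum.cong) (auto simp: e)
  also have "\<dots> = (if (k, l) \<in> R then b $ k $ l else 0)"
    by (simp add: sum.delta)
  finally show ?thesis .
qed

lemma Bf_expand:
  fixes A :: "complex^'n::finite^'n"
  shows "Bf A (\<chi> i. y$i + c * z$i) (\<chi> i. y$i + c * z$i)
     = Bf A y y + c * Bf A y z + cnj c * Bf A z y + cnj c * c * Bf A z z"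
  unfolding Bf_def
  by (simp add: algebra_simps sum.distrib sum_distrib_left)

lemma quad_neg:
  fixes r d :: real
  assumes "d > 0" "r \<noteq> 0"
  shows "(-r/(2*d))*r + (-r/(2*d))*(-r/(2*d))*d < 0"
proof -
  have "(-r/(2*d))*r + (-r/(2*d))*(-r/(2*d))*d = -(r*r)/(4*d)"
    using assms by (simp add: field_simps)
  also have "\<dots> < 0" using assms by (auto simp: zero_less_divide_iff zero_less_mult_iff)
  finally show ?thesis .
qed

lemma Bf_zero:
  fixes A :: "complex^'n::finite^'n"
  assumes "psd A" "Bf A y y = 0"
  shows "Bf A y z = 0 \<and> Bf A z y = 0"
proof -
  have pos: "Im (Bf A x x) = 0 \<and> Re (Bf A x x) \<ge> 0" for x
    using assms(1) unfolding psd_def Bf_def Let_def by blast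
  define a where "a = Bf A y z + Bf A z y"
  define c where "c = Bf A z z"
  have ex: "Bf A (\<chi> i. y$i + complex_of_real t * z$i) (\<chi> i. y$i + complex_of_real t * z$i)
      = complex_of_real t * a + complex_of_real (t*t) * c" for t
    using Bf_expand[of A y "complex_of_real t" z] assms(2) unfolding a_def c_def
    by (simp add: algebra_simps)
  have ge: "t * Re a + t * t * Re c \<ge> 0" for t
    using pos[of "\<chi> i. y$i + complex_of_real t * z$i"] ex[of t] by simp
  have imz: "Im a = 0"
    using pos[of "\<chi> i. y$i + complex_of_real 1 * z$i"] ex[of 1] pos[of z] unfolding c_def by simp
  have rez: "Re a = 0"
  proof (rule ccontr)
    assume h: "Re a \<noteq> 0"
    have c0: "Re c \<ge> 0" using pos[of z] unfolding c_def by simp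
    define t where "t = - Re a / (2 * (Re c + 1))"
    have "t * Re a + t * t * Re c \<le> t * Re a + t * t * (Re c + 1)" by (simp add: distrib_left)
    also have "\<dots> < 0" unfolding t_def using quad_neg[of "Re c + 1" "Re a"] c0 h by simp
    finally show False using ge[of t] by simp
  qed
  have a0: "Bf A y z = - Bf A z y"
    using imz rez unfolding a_def by (simp add: complex_eq_iff)
  define z' where "z' = (\<chi> i. \<i> * z $ i)"
  have b0: "Bf A y z' = - Bf A z' y"
  proof -
    define a' where "a' = Bf A y z' + Bf A z' y"
    have ex': "Bf A (\<chi> i. y$i + complex_of_real t * z'$i) (\<chi> i. y$i + complex_of_real t * z'$i)
      = complex_of_real t * a' + complex_of_real (t*t) * Bf A z' z'" for t
      using Bf_expand[of A y "complex_of_real t" z'] assms(2) unfolding a'_def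
      by (simp add: algebra_simps)
    have ge': "t * Re a' + t * t * Re (Bf A z' z') \<ge> 0" for t
      using pos[of "\<chi> i. y$i + complex_of_real t * z'$i"] ex'[of t] by simp
    have imz': "Im a' = 0"
      using pos[of "\<chi> i. y$i + complex_of_real 1 * z'$i"] ex'[of 1] pos[of z'] by simp
    have rez': "Re a' = 0"
    proof (rule ccontr)
      assume h: "Re a' \<noteq> 0"
      have c0: "Re (Bf A z' z') \<ge> 0" using pos[of z'] by simp
      define t where "t = - Re a' / (2 * (Re (Bf A z' z') + 1))"
      have "t * Re a' + t * t * Re (Bf A z' z') \<le> t * Re a' + t * t * (Re (Bf A z' z') + 1)" by (simp add: distrib_left)
      also have "\<dots> < 0" unfolding t_def using quad_neg[of "Re (Bf A z' z') + 1" "Re a'"] c0 h by simp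
      finally show False using ge'[of t] by simp
    qed
    show ?thesis using imz' rez' unfolding a'_def by (simp add: complex_eq_iff)
  qed
  have l1: "Bf A y z' = \<i> * Bf A y z"
    unfolding Bf_def z'_def by (simp add: sum_distrib_left algebra_simps)
  have l2: "Bf A z' y = - \<i> * Bf A z y"
    unfolding Bf_def z'_def by (simp add: sum_distrib_left algebra_simps)
  from b0 l1 l2 have "Bf A y z = Bf A z y" by simp
  with a0 show ?thesis by simp
qed


lemma Bf_units:
  fixes A :: "complex^'n::finite^'n"
  shows "Bf A (\<chi> i. if i = k then a else 0) (\<chi> i. if i = l then b else 0) = cnj a * A$k$l * b"
  unfolding Bf_def by (simp add: if_distrib[where f=cnj] if_distrib[where f="\<lambda>x. x * c" for c] if_distrib[where f="\<lambda>x. c * x" for c] sum.delta cong: if_cong)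

lemma Bf_lin:
  fixes A :: "complex^'n::finite^'n"
  shows "Bf A x (\<chi> i. y$i + c * z$i) = Bf A x y + c * Bf A x z"
  unfolding Bf_def by (simp add: algebra_simps sum.distrib sum_distrib_left)

theorem lemma4p13:
  fixes R :: "('n::finite \<times> 'n) set" and \<rho> :: "complex^'n^'n" and v :: "complex^'n"
  assumes "tolerance_rel R"
    and "density_matrix \<rho>"
    and "norm v = 1"
    and "R_tolerant R v"
    and "Tmap R \<rho> = Tmap R (P v)"
  shows "\<rho> = P v"
proof -
  have psdr: "psd \<rho>" using assms(2) unfolding density_matrix_def by simp
  have refl: "(i, i) \<in> R" for i using assms(1) unfolding tolerance_rel_def by simp
  have symR: "(j, i) \<in> R" if "(i, j) \<in> R" for i j
    using assms(1) that unfolding tolerance_rel_def sym_def by blast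
  have ent: "\<rho> $ k $ l = v $ k * cnj (v $ l)" if "(k, l) \<in> R" for k l
    using arg_cong[OF assms(5), of "\<lambda>M. M $ k $ l"] that
    by (simp add: Tmap_entry proj_vec_def)
  define ev :: "'n \<Rightarrow> complex \<Rightarrow> complex^'n" where "ev k a = (\<chi> i. if i = k then a else 0)" for k a
  have Bu: "Bf \<rho> (ev k a) (ev l b) = cnj a * \<rho>$k$l * b" for k l a b
    unfolding ev_def by (rule Bf_units)
  define Q where "Q l l' \<longleftrightarrow> (\<forall>m. \<rho>$m$l * cnj (v$l') = \<rho>$m$l' * cnj (v$l))" for l l'
  have edge: "Q l l'" if "(l, l') \<in> R" for l l'
  proof -
    define y where "y = (\<chi> i. ev l (cnj (v$l')) $ i + (- cnj (v$l)) * ev l' 1 $ i)"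
    have "Bf \<rho> y y = 0"
      unfolding y_def Bf_expand Bu using ent[OF that] ent[OF refl[of l]] ent[OF refl[of l']]
        ent[OF symR[OF that]]
      by (simp add: algebra_simps)
    hence z: "Bf \<rho> (ev m 1) y = 0" for m using Bf_zero[OF psdr] by blast
    show ?thesis unfolding Q_def
    proof
      fix m
      from z[of m] show "\<rho>$m$l * cnj (v$l') = \<rho>$m$l' * cnj (v$l)"
        unfolding y_def Bf_lin Bu by simp
    qed
  qed
  have trans: "Q a c" if "Q a b" "Q b c" "v$b \<noteq> 0" for a b c
    unfolding Q_def
  proof
    fix m
    have 1: "\<rho>$m$a * cnj (v$b) = \<rho>$m$b * cnj (v$a)" using that(1) unfolding Q_def by blast
    have 2: "\<rho>$m$b * cnj (v$c) = \<rho>$m$c * cnj (v$b)" using that(2) unfolding Q_def by blast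
    have "(\<rho>$m$a * cnj (v$c)) * cnj (v$b) = (\<rho>$m$c * cnj (v$a)) * cnj (v$b)"
      by (metis 1 2 mult.assoc mult.commute)
    then show "\<rho>$m$a * cnj (v$c) = \<rho>$m$c * cnj (v$a)" using that(3) by simp
  qed
  have conn: "Q k j" if "(k, j) \<in> (Rv R v)\<^sup>*" for k j
    using that
  proof (induction rule: rtrancl_induct)
    case base
    then show ?case unfolding Q_def by simp
  next
    case (step y z)
    then show ?case using edge trans unfolding Rv_def by blast
  qed
  show ?thesis
  proof (simp add: vec_eq_iff, intro allI)
    fix m l
    show "\<rho>$m$l = P v $ m $ l"
    proof (cases "v$l = 0")
      case True
      have "Bf \<rho> (ev l 1) (ev l 1) = 0" using ent[OF refl[of l]] True by (simp add: Bu)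
      then have "Bf \<rho> (ev m 1) (ev l 1) = 0" using Bf_zero[OF psdr] by blast
      then show ?thesis using True by (simp add: Bu proj_vec_def)
    next
      case F1: False
      show ?thesis
      proof (cases "v$m = 0")
        case True
        have "Bf \<rho> (ev m 1) (ev m 1) = 0" using ent[OF refl[of m]] True by (simp add: Bu)
        then have "Bf \<rho> (ev m 1) (ev l 1) = 0" using Bf_zero[OF psdr] by blast
        then show ?thesis using True by (simp add: Bu proj_vec_def)
      next
        case False
        have "(l, m) \<in> (Rv R v)\<^sup>*" using assms(4) F1 False unfolding R_tolerant_def by blast
        then have "Q l m" by (rule conn)
        then have "\<rho>$m$l * cnj (v$m) = \<rho>$m$m * cnj (v$l)" unfolding Q_def by blast
        also have "\<dots> = (v$m * cnj (v$l)) * cnj (v$m)" using ent[OF refl[of m]] by simp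
        finally show ?thesis using False by (simp add: proj_vec_def)
      qed
    qed
  qed
qed

end
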